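(* Let $\sigma>0$ and let $f(z)=\sum_{k=0}^\infty f_kz^k$ with $|f_k|\le(k+2)^{-1-\sigma}$ for all $k\ge0$. Let $g(z)=\exp\left(\int_0^zf(\zeta)\,d\zeta\right)=1+\sum_{k=1}^\infty g_kz^k$. Then $|g_1|\le2^{-1-\sigma}$ and $|g_k|<(k+1)^{-1-\sigma}$ for $k=2,3,\dots$. *)

theory Defs
  imports Complex_Main "HOL-Computational_Algebra.Formal_Power_Series"
begin

definition exp_integral_fps :: "complex fps \<Rightarrow> complex fps" where
  "exp_integral_fps f = fps_exp 1 oo fps_integral0 f"

end

theory Submission
  imports Defs
begin

unbundle fps_syntax

lemma rec_g:
  fixes f :: "complex fps"
  defines "g \<equiv> exp_integral_fps f"
  shows "g $ 0 = 1" and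
    "of_nat (Suc n) * g $ Suc n = (\<Sum>i=0..n. f $ i * g $ (n - i))"
proof -
  show "g $ 0 = 1" unfolding g_def exp_integral_fps_def by simp
  have "fps_deriv g = (fps_deriv (fps_exp 1) oo fps_integral0 f) * fps_deriv (fps_integral0 f)"
    unfolding g_def exp_integral_fps_def by (rule fps_compose_deriv) simp
  also have "\<dots> = g * f" unfolding g_def exp_integral_fps_def
    by (simp add: fps_deriv_fps_integral)
  finally have "fps_deriv g $ n = (f * g) $ n" by (simp add: mult.commute)
  then show "of_nat (Suc n) * g $ Suc n = (\<Sum>i=0..n. f $ i * g $ (n - i))"
    by (simp add: fps_mult_nth)
qed

lemma prod_bound:
  fixes a :: real assumes "a > 0" "i \<le> n"
  shows "(real i + 2) powr (-a) * (real (n - i) + 1) powr (-a) \<le> (real n + 2) powr (-a)"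
    and "n \<ge> 1 \<Longrightarrow> i = 0 \<Longrightarrow> (real i + 2) powr (-a) * (real (n - i) + 1) powr (-a) < (real n + 2) powr (-a)"
proof -
  have e: "(real i + 2) powr (-a) * (real (n - i) + 1) powr (-a) = ((real i + 2) * (real (n - i) + 1)) powr (-a)"
    by (simp add: powr_mult)
  have ge: "(real i + 2) * (real (n - i) + 1) \<ge> real n + 2"
  proof -
    have "real (n - i) = real n - real i" using assms by simp
    moreover have "real i * (real n - real i) \<ge> 0" using assms by simp
    ultimately show ?thesis by (simp add: algebra_simps)
  qed
  show "(real i + 2) powr (-a) * (real (n - i) + 1) powr (-a) \<le> (real n + 2) powr (-a)"
    unfolding e using ge assms by (intro powr_mono2') auto
  assume "n \<ge> 1" "i = 0"
  then have "(real i + 2) * (real (n - i) + 1) > real n + 2" by simp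
  then show "(real i + 2) powr (-a) * (real (n - i) + 1) powr (-a) < (real n + 2) powr (-a)"
    unfolding e using assms
    by (metis add_nonneg_pos of_nat_0_le_iff powr_less_mono2_neg zero_less_numeral neg_less_0_iff_less)
qed

theorem lemma3p2:
  fixes \<sigma> :: real and fc :: "nat \<Rightarrow> complex"
  assumes "\<sigma> > 0"
    and "\<And>k. norm (fc k) \<le> (real k + 2) powr (-1 - \<sigma>)"
  shows "norm (fps_nth (exp_integral_fps (Abs_fps fc)) 1) \<le> 2 powr (-1 - \<sigma>) \<and>
         (\<forall>k\<ge>2. norm (fps_nth (exp_integral_fps (Abs_fps fc)) k) < (real k + 1) powr (-1 - \<sigma>))"
proof -
  define a where "a = 1 + \<sigma>"
  have a: "a > 0" using assms(1) a_def by simp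
  have fb: "norm (fc k) \<le> (real k + 2) powr (-a)" for k using assms(2)[of k] a_def by simp
  define g where "g = exp_integral_fps (Abs_fps fc)"
  have g0: "g $ 0 = 1" and rec: "\<And>n. of_nat (Suc n) * g $ Suc n = (\<Sum>i=0..n. fc i * g $ (n - i))"
    using rec_g[where f="Abs_fps fc"] unfolding g_def by auto
  have nrm: "norm (g $ Suc n) = norm (\<Sum>i=0..n. fc i * g $ (n - i)) / (real n + 1)" for n
  proof -
    have "norm (of_nat (Suc n) * g $ Suc n) = (real n + 1) * norm (g $ Suc n)"
      by (simp only: norm_mult norm_of_nat) simp
    then show ?thesis using rec[of n] by (simp add: field_simps)
  qed
  have bnd: "norm (g $ k) \<le> (real k + 1) powr (-a)" for k
  proof (induction k rule: less_induct)
    case (less k)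
    show ?case
    proof (cases k)
      case 0 then show ?thesis using g0 by simp
    next
      case (Suc n)
      have "norm (\<Sum>i=0..n. fc i * g $ (n - i)) \<le> (\<Sum>i=0..n. norm (fc i) * norm (g $ (n - i)))"
        by (rule order_trans[OF norm_sum]) (simp add: norm_mult)
      also have "\<dots> \<le> (\<Sum>i=0..n. (real i + 2) powr (-a) * (real (n - i) + 1) powr (-a))"
      proof (rule sum_mono)
        fix i assume "i \<in> {0..n}"
        have "norm (g $ (n - i)) \<le> (real (n - i) + 1) powr (-a)" using less Suc by simp
        then show "norm (fc i) * norm (g $ (n - i)) \<le> (real i + 2) powr (-a) * (real (n - i) + 1) powr (-a)"
          using fb[of i] by (intro mult_mono) auto
      qed
      also have "\<dots> \<le> (\<Sum>i=0..n. (real n + 2) powr (-a))"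
        by (rule sum_mono) (use prod_bound(1)[OF a] in auto)
      also have "\<dots> = (real n + 1) * (real n + 2) powr (-a)" by simp
      finally have "norm (\<Sum>i=0..n. fc i * g $ (n - i)) / (real n + 1) \<le> (real n + 2) powr (-a)"
        by (simp add: field_simps)
      then show ?thesis using nrm[of n] Suc by (simp add: add.commute)
    qed
  qed
  have strict: "norm (g $ k) < (real k + 1) powr (-a)" if "k \<ge> 2" for k
  proof -
    define n where "n = k - 1"
    have n: "k = Suc n" "n \<ge> 1" using that unfolding n_def by auto
    have "norm (\<Sum>i=0..n. fc i * g $ (n - i)) \<le> (\<Sum>i=0..n. norm (fc i) * norm (g $ (n - i)))"
      by (rule order_trans[OF norm_sum]) (simp add: norm_mult)
    also have "\<dots> \<le> (\<Sum>i=0..n. (real i + 2) powr (-a) * (real (n - i) + 1) powr (-a))"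
    proof (rule sum_mono)
      fix i assume "i \<in> {0..n}"
      have "norm (g $ (n - i)) \<le> (real (n - i) + 1) powr (-a)" using bnd by simp
      then show "norm (fc i) * norm (g $ (n - i)) \<le> (real i + 2) powr (-a) * (real (n - i) + 1) powr (-a)"
        using fb[of i] by (intro mult_mono) auto
    qed
    also have "\<dots> < (\<Sum>i=0..n. (real n + 2) powr (-a))"
      by (rule sum_strict_mono_ex1, use prod_bound(1)[OF a] in auto, rule bexI[of _ 0], use prod_bound(2)[OF a, of 0 n] n in auto)
    also have "\<dots> = (real n + 1) * (real n + 2) powr (-a)" by simp
    finally have "norm (\<Sum>i=0..n. fc i * g $ (n - i)) / (real n + 1) < (real n + 2) powr (-a)"
      by (simp add: field_simps)
    then show ?thesis using nrm[of n] n by (simp add: add.commute)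
  qed
  have "norm (g $ 1) \<le> 2 powr (-a)" using bnd[of 1] by simp
  then show ?thesis using strict unfolding g_def a_def by simp
qed

end
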